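(* Let $\Gamma$ be a 3-colex and $E$ an $X$-type error on the color code on $\Gamma$. For each color $c\in\{r,b,g,y\}$ let $S_c$ be an $X$-stabilizer generator of the 3D toric code on $\Gamma^{*\setminus c}$. Then there is an $X$-stabilizer $S$ of the color code such that $$\partial E+\sum_c\mathrm{supp}(S_c)=\partial(ES),$$ with sums taken mod 2.
   Context: Colors are $\{r,b,g,y\}$. A 3-colex $\Gamma$ is a 3-dimensional cell complex without boundary in which every vertex is 4-valent and lies in exactly four 3-cells, and whose 3-cells are properly 4-colored: every face lies in exactly two 3-cells, which have different colors. The dual complex $\Gamma^*$ has an $i$-cell for every $(3-i)$-cell of $\Gamma$, with incidences reversed; every 3-cell of $\Gamma^*$ is a tetrahedron. A vertex of $\Gamma^*$ is given the color of the corresponding 3-cell of $\Gamma$, so the four vertices of each tetrahedron have distinct colors. A face of $\Gamma^*$ is a $c$-face if none of its vertices has color $c$. The 3D color code on $\Gamma$ has one qubit per tetrahedron $\nu$ of $\Gamma^*$ and $X$-stabilizer generators $B^X_v=\prod_{\nu\ni v}X_\nu$ for vertices $v$ of $\Gamma^*$; its $X$-stabilizers are products of these. The minor complex $\Gamma^{*\setminus c}$ is obtained from $\Gamma^*$ by deleting all vertices of color $c$ together with all edges and faces incident to them; its faces are the $c$-faces of $\Gamma^*$ and its 3-cells are obtained by merging, for each $c$-vertex, the tetrahedra containing it. The 3D toric code on $\Gamma^{*\setminus c}$ has qubits on faces and $X$-stabilizer generators $\prod_{f\in\partial\mu}X_f$ for 3-cells $\mu$. The support of an operator is the mod-2 formal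 sum (set) of cells on which it acts nontrivially. For $E=\prod_{\nu\in\Omega}X_\nu$, $\partial E=\sum_{\nu\in\Omega}\partial\nu$ (mod 2), where $\partial\nu$ is the set of four faces of the tetrahedron $\nu$. *)

theory Defs
  imports Main
begin

datatype color = Red | Blue | Green | Yellow

text \<open>V: vertices of the dual complex (one per 3-cell of the colex), coloured by col;
  F: faces (triangles); T: tetrahedra (3-cells of the dual complex).
  fv f: vertex set of face f; tv t: vertex set of tetrahedron t;
  bd t: the four faces of tetrahedron t.\<close>

definition dual_colex ::
  "'v set \<Rightarrow> 'f set \<Rightarrow> 't set \<Rightarrow> ('v \<Rightarrow> color) \<Rightarrow> ('f \<Rightarrow> 'v set) \<Rightarrow> ('t \<Rightarrow> 'v set)
   \<Rightarrow> ('t \<Rightarrow> 'f set) \<Rightarrow> bool" where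
  "dual_colex V F T col fv tv bd \<longleftrightarrow>
     finite V \<and> finite F \<and> finite T \<and>
     (\<forall>t\<in>T. tv t \<subseteq> V \<and> card (tv t) = 4 \<and> inj_on col (tv t) \<and>
              bd t \<subseteq> F \<and> card (bd t) = 4 \<and> inj_on fv (bd t) \<and>
              (\<forall>f\<in>bd t. fv f \<subseteq> tv t)) \<and>
     (\<forall>f\<in>F. fv f \<subseteq> V \<and> card (fv f) = 3 \<and> card {t\<in>T. f \<in> bd t} = 2) \<and>
     (\<forall>v\<in>V. \<exists>t\<in>T. v \<in> tv t)"

text \<open>Boundary (mod 2) of an X-type operator on the colour code, given by its support
  (a set of tetrahedra): each face counted with multiplicity mod 2.\<close>
definition bdry :: "'f set \<Rightarrow> 't set \<Rightarrow> ('t \<Rightarrow> 'f set) \<Rightarrow> 't set \<Rightarrow> 'f set" where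
  "bdry F T bd \<Omega> = {f\<in>F. odd (card {t\<in>\<Omega> \<inter> T. f \<in> bd t})}"

definition cc_gen_supp :: "'t set \<Rightarrow> ('t \<Rightarrow> 'v set) \<Rightarrow> 'v \<Rightarrow> 't set" where
  "cc_gen_supp T tv v = {t\<in>T. v \<in> tv t}"

definition cc_X_stabilizers :: "'v set \<Rightarrow> 't set \<Rightarrow> ('t \<Rightarrow> 'v set) \<Rightarrow> 't set set" where
  "cc_X_stabilizers V T tv =
     {{t\<in>T. odd (card {v\<in>W. t \<in> cc_gen_supp T tv v})} | W. W \<subseteq> V}"

text \<open>Minor complex without colour c: faces are the c-faces; 3-cells are indexed by
  the c-vertices v (merging of the tetrahedra containing v).\<close>
definition c_faces :: "'f set \<Rightarrow> ('v \<Rightarrow> color) \<Rightarrow> ('f \<Rightarrow> 'v set) \<Rightarrow> color \<Rightarrow> 'f set" where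
  "c_faces F col fv c = {f\<in>F. \<forall>u\<in>fv f. col u \<noteq> c}"

definition minor_cell_bdry ::
  "'f set \<Rightarrow> 't set \<Rightarrow> ('v \<Rightarrow> color) \<Rightarrow> ('f \<Rightarrow> 'v set) \<Rightarrow> ('t \<Rightarrow> 'v set) \<Rightarrow> ('t \<Rightarrow> 'f set)
   \<Rightarrow> color \<Rightarrow> 'v \<Rightarrow> 'f set" where
  "minor_cell_bdry F T col fv tv bd c v =
     {f\<in>c_faces F col fv c. odd (card {t\<in>T. v \<in> tv t \<and> f \<in> bd t})}"

definition toric_X_gens ::
  "'v set \<Rightarrow> 'f set \<Rightarrow> 't set \<Rightarrow> ('v \<Rightarrow> color) \<Rightarrow> ('f \<Rightarrow> 'v set) \<Rightarrow> ('t \<Rightarrow> 'v set)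
   \<Rightarrow> ('t \<Rightarrow> 'f set) \<Rightarrow> color \<Rightarrow> 'f set set" where
  "toric_X_gens V F T col fv tv bd c =
     {minor_cell_bdry F T col fv tv bd c v | v. v \<in> V \<and> col v = c}"

definition sum_mod2 :: "(color \<Rightarrow> 'f set) \<Rightarrow> 'f set" where
  "sum_mod2 A = {f. odd (card {c. f \<in> A c})}"

end

theory Submission
  imports Defs "HOL-Library.Z2"
begin

lemma bit_of_nat: "(of_nat n :: bit) = of_bool (odd n)"
  by (induction n) auto

lemma bit_card: "finite A \<Longrightarrow> (of_nat (card {x\<in>A. P x}) :: bit) = (\<Sum>x\<in>A. of_bool (P x))"
proof -
  assume "finite A"
  have "(of_nat (card {x\<in>A. P x}) :: bit) = (\<Sum>x\<in>{x\<in>A. P x}. 1)" by simp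
  also have "\<dots> = (\<Sum>x\<in>A. if P x then 1 else 0)"
    using \<open>finite A\<close> by (rule sum.inter_filter)
  finally show ?thesis unfolding of_bool_def .
qed

lemma odd_card_bit: "finite A \<Longrightarrow> odd (card {x\<in>A. P x}) \<longleftrightarrow> (\<Sum>x\<in>A. of_bool (P x) :: bit) = 1"
  using bit_card[of A P] bit_of_nat[of "card {x\<in>A. P x}"] by auto

lemma bit_xor: "of_bool (P \<noteq> Q) = (of_bool P + of_bool Q :: bit)"
  by auto

lemma bit_and: "of_bool (P \<and> Q) = (of_bool P * of_bool Q :: bit)"
  by auto

lemma bit_one_iff: "(x::bit) = 1 \<longleftrightarrow> x \<noteq> 0"
  by simp

lemma color_UNIV: "(UNIV :: color set) = {Red, Blue, Green, Yellow}"
  using color.exhaust by auto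

lemma finite_color: "finite (UNIV :: color set)"
  by (simp add: color_UNIV)

theorem lemma9:
  fixes V :: "'v set" and F :: "'f set" and T :: "'t set"
    and col :: "'v \<Rightarrow> color" and fv :: "'f \<Rightarrow> 'v set" and tv :: "'t \<Rightarrow> 'v set"
    and bd :: "'t \<Rightarrow> 'f set" and E :: "'t set" and Sc :: "color \<Rightarrow> 'f set"
  assumes "dual_colex V F T col fv tv bd"
    and "E \<subseteq> T"
    and "\<forall>c. Sc c \<in> toric_X_gens V F T col fv tv bd c"
  shows "\<exists>S\<in>cc_X_stabilizers V T tv.
           bdry F T bd E \<union> sum_mod2 Sc - (bdry F T bd E \<inter> sum_mod2 Sc)
           = bdry F T bd ((E - S) \<union> (S - E))"
proof -
  note D = assms(1)[unfolded dual_colex_def]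
  have fT: "finite T" using assms(1) unfolding dual_colex_def by simp
  have Dt: "\<And>t. t \<in> T \<Longrightarrow> card (tv t) = 4 \<and> inj_on col (tv t) \<and> (\<forall>f\<in>bd t. fv f \<subseteq> tv t)"
    using D by blast
  have Df: "\<And>f. f \<in> F \<Longrightarrow> card {t\<in>T. f \<in> bd t} = 2"
    using D by blast
  have "\<forall>c. \<exists>w. w \<in> V \<and> col w = c \<and> Sc c = minor_cell_bdry F T col fv tv bd c w"
    using assms(3) unfolding toric_X_gens_def by blast
  then obtain v where v: "\<And>c. v c \<in> V \<and> col (v c) = c \<and> Sc c = minor_cell_bdry F T col fv tv bd c (v c)"
    by metis
  have injv: "inj v" by (metis injI v)
  define W where "W = range v"
  define S where "S = {t\<in>T. odd (card {w\<in>W. t \<in> cc_gen_supp T tv w})}"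
  have SS: "S \<in> cc_X_stabilizers V T tv"
    unfolding cc_X_stabilizers_def S_def W_def using v by blast
  have Sbit: "of_bool (t \<in> S) = (\<Sum>c\<in>UNIV. of_bool (v c \<in> tv t) :: bit)" if "t \<in> T" for t
  proof -
    have "{w\<in>W. t \<in> cc_gen_supp T tv w} = v ` {c. v c \<in> tv t}"
      unfolding W_def cc_gen_supp_def using that by auto
    hence "card {w\<in>W. t \<in> cc_gen_supp T tv w} = card {c\<in>UNIV. v c \<in> tv t}"
      using injv by (simp add: card_image inj_on_subset)
    thus ?thesis using that odd_card_bit[OF finite_color, of "\<lambda>c. v c \<in> tv t"]
      unfolding S_def by auto
  qed
  have cellA: "(\<Sum>t\<in>T. of_bool (v c \<in> tv t \<and> f \<in> bd t) :: bit) = of_bool (f \<in> Sc c)"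
    if fF: "f \<in> F" for f c
  proof -
    have key: "f \<in> c_faces F col fv c" if odd: "odd (card {t\<in>T. v c \<in> tv t \<and> f \<in> bd t})"
    proof -
      have nv: "v c \<notin> fv f"
      proof
        assume vin: "v c \<in> fv f"
        have "{t\<in>T. v c \<in> tv t \<and> f \<in> bd t} = {t\<in>T. f \<in> bd t}"
          using Dt vin by blast
        thus False using odd Df[OF fF] by simp
      qed
      from odd have "{t\<in>T. v c \<in> tv t \<and> f \<in> bd t} \<noteq> {}" by (metis card.empty odd_card_imp_not_empty)
      then obtain t where t: "t \<in> T" "v c \<in> tv t" "f \<in> bd t" by blast
      have sub: "fv f \<subseteq> tv t" using Dt t by blast
            have "\<forall>u\<in>fv f. col u \<noteq> c"
      proof
        fix u assume u: "u \<in> fv f"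
        have "u \<noteq> v c" using u nv by blast
        moreover have "inj_on col (tv t)" using Dt t by blast
        ultimately show "col u \<noteq> c" using u sub t(2) v[of c] by (metis inj_on_def subsetD)
      qed
      thus ?thesis unfolding c_faces_def using fF by blast
    qed
    have "(\<Sum>t\<in>T. of_bool (v c \<in> tv t \<and> f \<in> bd t) :: bit) = of_bool (odd (card {t\<in>T. v c \<in> tv t \<and> f \<in> bd t}))"
      using bit_card[OF fT, of "\<lambda>t. v c \<in> tv t \<and> f \<in> bd t"] bit_of_nat by metis
    also have "\<dots> = of_bool (f \<in> Sc c)"
      using v[of c] key unfolding minor_cell_bdry_def by auto
    finally show ?thesis .
  qed
  have bdry_iff: "f \<in> bdry F T bd X \<longleftrightarrow> f \<in> F \<and> (\<Sum>t\<in>T. of_bool (t \<in> X \<and> f \<in> bd t) :: bit) = 1" for f X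
  proof -
    have "{t\<in>X \<inter> T. f \<in> bd t} = {t\<in>T. t \<in> X \<and> f \<in> bd t}" by blast
    thus ?thesis unfolding bdry_def using odd_card_bit[OF fT, of "\<lambda>t. t \<in> X \<and> f \<in> bd t"] by auto
  qed
  have sum_iff: "f \<in> sum_mod2 Sc \<longleftrightarrow> (\<Sum>c\<in>UNIV. of_bool (f \<in> Sc c) :: bit) = 1" for f
    unfolding sum_mod2_def using odd_card_bit[OF finite_color, of "\<lambda>c. f \<in> Sc c"] by simp
  have ScF: "Sc c \<subseteq> F" for c using v[of c] unfolding minor_cell_bdry_def c_faces_def by auto
  show ?thesis
  proof (rule bexI[OF _ SS], rule set_eqI)
    fix f
    show "f \<in> bdry F T bd E \<union> sum_mod2 Sc - (bdry F T bd E \<inter> sum_mod2 Sc)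
           \<longleftrightarrow> f \<in> bdry F T bd ((E - S) \<union> (S - E))"
    proof (cases "f \<in> F")
      case False
      have "\<forall>c. f \<notin> Sc c" using False ScF by blast
      hence "f \<notin> sum_mod2 Sc" by (simp add: sum_iff)
      thus ?thesis using False bdry_iff by blast
    next
      case True
      have "(\<Sum>t\<in>T. of_bool (t \<in> (E - S) \<union> (S - E) \<and> f \<in> bd t) :: bit)
          = (\<Sum>t\<in>T. of_bool (t \<in> E \<and> f \<in> bd t) + of_bool (t \<in> S) * of_bool (f \<in> bd t))"
        by (rule sum.cong) auto
      also have "\<dots> = (\<Sum>t\<in>T. of_bool (t \<in> E \<and> f \<in> bd t)) + (\<Sum>t\<in>T. (\<Sum>c\<in>UNIV. of_bool (v c \<in> tv t \<and> f \<in> bd t)))"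
      proof -
        have "(\<Sum>t\<in>T. of_bool (t \<in> E \<and> f \<in> bd t) + of_bool (t \<in> S) * of_bool (f \<in> bd t))
            = (\<Sum>t\<in>T. of_bool (t \<in> E \<and> f \<in> bd t) + (\<Sum>c\<in>UNIV. of_bool (v c \<in> tv t \<and> f \<in> bd t)) :: bit)"
        proof (rule sum.cong[OF refl])
          fix t assume tT: "t \<in> T"
          have "of_bool (t \<in> S) * of_bool (f \<in> bd t) = (\<Sum>c\<in>UNIV. of_bool (v c \<in> tv t)) * (of_bool (f \<in> bd t) :: bit)"
            using Sbit[OF tT] by simp
          also have "\<dots> = (\<Sum>c\<in>UNIV. of_bool (v c \<in> tv t) * of_bool (f \<in> bd t))"
            by (rule sum_distrib_right)
          also have "\<dots> = (\<Sum>c\<in>UNIV. of_bool (v c \<in> tv t \<and> f \<in> bd t))"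
            by (rule sum.cong[OF refl]) (rule bit_and[symmetric])
          finally show "of_bool (t \<in> E \<and> f \<in> bd t) + of_bool (t \<in> S) * of_bool (f \<in> bd t)
            = (of_bool (t \<in> E \<and> f \<in> bd t) + (\<Sum>c\<in>UNIV. of_bool (v c \<in> tv t \<and> f \<in> bd t)) :: bit)"
            by simp
        qed
        thus ?thesis by (simp only: sum.distrib)
      qed
      also have "(\<Sum>t\<in>T. (\<Sum>c\<in>UNIV. of_bool (v c \<in> tv t \<and> f \<in> bd t))) = (\<Sum>c\<in>UNIV. (\<Sum>t\<in>T. of_bool (v c \<in> tv t \<and> f \<in> bd t)) :: bit)"
        by (rule sum.swap)
      also have "\<dots> = (\<Sum>c\<in>UNIV. of_bool (f \<in> Sc c))" using cellA[OF True] by simp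
      finally have eq: "(\<Sum>t\<in>T. of_bool (t \<in> (E - S) \<union> (S - E) \<and> f \<in> bd t) :: bit)
          = (\<Sum>t\<in>T. of_bool (t \<in> E \<and> f \<in> bd t)) + (\<Sum>c\<in>UNIV. of_bool (f \<in> Sc c))" .
      have ab: "((a::bit) = 1 \<or> b = 1) \<and> \<not> (a = 1 \<and> b = 1) \<longleftrightarrow> a + b = 1" for a b
        by (cases a; cases b) auto
      show ?thesis using True eq ab bdry_iff sum_iff by auto
    qed
  qed
qed

end
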